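(* Let $(\mathcal{T},q)$ be an interaction-free OMQ with $\mathcal{T}$ a DL-Lite$_\mathcal{R}$ TBox and $q$ a Boolean CQ, let $\mathcal{A}$ be an ABox consistent with $\mathcal{T}$, and let $x$ be a shared variable of $q$ (a variable occurring in at least two distinct atoms of $q$). Then for every homomorphism $h:q\to\mathcal{C}_{\mathcal{A},\mathcal{T}}$ we have $h(x)\in\mathrm{const}(\mathcal{A})$.
   Context: DL-Lite$_\mathcal{R}$ TBoxes contain inclusions $B\sqsubseteq C$, $R\sqsubseteq S$ with $B::=A\mid\exists R$, $C::=B\mid\neg B$, $R$ a role ($r$ or $r^-$), $S::=R\mid\neg R$. An ABox $\mathcal{A}$ is a finite set of assertions $A(c)$, $r(b,c)$; $\mathrm{const}(\mathcal{A})$ is its set of individuals. For a consistent KB $(\mathcal{A},\mathcal{T})$, the canonical model $\mathcal{C}_{\mathcal{A},\mathcal{T}}$ has domain all words $aR_1\cdots R_n$ ($n\ge0$, $a\in\mathrm{const}(\mathcal{A})$, $R_i$ roles) such that if $n\ge1$ then $(\mathcal{A},\mathcal{T})\models\exists R_1(a)$ and there is no $b\in\mathrm{const}(\mathcal{A})$ with $(\mathcal{A},\mathcal{T})\models R_1(a,b)$, and for $1\le i<n$, $\mathcal{T}\models\exists R_i^-\sqsubseteq\exists R_{i+1}$ and $R_i^-\neq R_{i+1}$; it interprets $a$ as $a$, $A$ as the individuals $a$ with $(\mathcal{A},\mathcal{T})\models A(a)$ plus words $aR_1\cdots R_n$ ($n\ge1$) with $\mathcal{T}\models\exists R_n^-\sqsubseteq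 A$, and $r$ as the pairs $(a,b)$ with $r(a,b)\in\mathcal{A}$, plus $(w,wR')$ with $\mathcal{T}\models R'\sqsubseteq r$, plus $(wR',w)$ with $\mathcal{T}\models R'\sqsubseteq r^-$. Elements outside $\mathrm{const}(\mathcal{A})$ are anonymous. Let $\circledast$ be a special symbol and $C^\circledast=C\cup\{\circledast\}$. For an atom $\alpha$ and $\mu:\mathrm{vars}(\alpha)\to\mathrm{const}(\mathcal{A})^\circledast$, write $(\mathcal{A},\mathcal{T})\models_\mu\alpha$ if there is a homomorphism $h:\alpha\to\mathcal{C}_{\mathcal{A},\mathcal{T}}$ with $h(x)=\mu(x)$ when $\mu(x)\in\mathrm{const}(\mathcal{A})$ and $h(x)$ anonymous when $\mu(x)=\circledast$. $(\mathcal{T},q)$ is interaction-free if for every assertion $f$, all atoms $\alpha,\beta$ of $q$ and all $\mu_\alpha:\mathrm{vars}(\alpha)\to\mathrm{const}(f)^\circledast$, $\mu_\beta:\mathrm{vars}(\beta)\to\mathrm{const}(f)^\circledast$, if $(\{f\},\mathcal{T})\models_{\mu_\alpha}\alpha$ and $(\{f\},\mathcal{T})\models_{\mu_\beta}\beta$ then $(\alpha,\mu_\alpha)=(\beta,\mu_\beta)$. Homomorphisms from $q$ map constants to themselves. *)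

theory Defs
  imports Main
begin

datatype 'r role = P 'r | Inv 'r

fun inv :: "'r role \<Rightarrow> 'r role" where
  "inv (P r) = Inv r"
| "inv (Inv r) = P r"

datatype ('a, 'r) basic = Atomic 'a | Ex "'r role"

datatype ('a, 'r) concept = Pos "('a, 'r) basic" | Neg "('a, 'r) basic"

datatype 'r grole = RPos "'r role" | RNeg "'r role"

datatype ('a, 'r) axiom = CI "('a, 'r) basic" "('a, 'r) concept" | RI "'r role" "'r grole"

datatype ('a, 'r, 'c) assertion = CA 'a 'c | RA 'r 'c 'c

fun consts_of :: "('a, 'r, 'c) assertion \<Rightarrow> 'c set" where
  "consts_of (CA A c) = {c}"
| "consts_of (RA r b c) = {b, c}"

definition const :: "('a, 'r, 'c) assertion set \<Rightarrow> 'c set" where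
  "const Ab = (\<Union>f\<in>Ab. consts_of f)"

record ('a, 'r, 'c, 'd) interp =
  idom :: "'d set"
  conc :: "'a \<Rightarrow> 'd set"
  rol  :: "'r \<Rightarrow> ('d \<times> 'd) set"
  ind  :: "'c \<Rightarrow> 'd"

definition wf_interp :: "('a, 'r, 'c, 'd) interp \<Rightarrow> bool" where
  "wf_interp I \<longleftrightarrow> idom I \<noteq> {} \<and> (\<forall>A. conc I A \<subseteq> idom I)
     \<and> (\<forall>r. rol I r \<subseteq> idom I \<times> idom I) \<and> (\<forall>c. ind I c \<in> idom I)
     \<and> inj (ind I)"  (* unique name assumption *)

fun role_ext :: "('a, 'r, 'c, 'd) interp \<Rightarrow> 'r role \<Rightarrow> ('d \<times> 'd) set" where
  "role_ext I (P r) = rol I r"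
| "role_ext I (Inv r) = converse (rol I r)"

fun basic_ext :: "('a, 'r, 'c, 'd) interp \<Rightarrow> ('a, 'r) basic \<Rightarrow> 'd set" where
  "basic_ext I (Atomic A) = conc I A"
| "basic_ext I (Ex R) = Domain (role_ext I R)"

fun sat_ax :: "('a, 'r, 'c, 'd) interp \<Rightarrow> ('a, 'r) axiom \<Rightarrow> bool" where
  "sat_ax I (CI B (Pos B')) \<longleftrightarrow> basic_ext I B \<subseteq> basic_ext I B'"
| "sat_ax I (CI B (Neg B')) \<longleftrightarrow> basic_ext I B \<inter> basic_ext I B' = {}"
| "sat_ax I (RI R (RPos S)) \<longleftrightarrow> role_ext I R \<subseteq> role_ext I S"
| "sat_ax I (RI R (RNeg S)) \<longleftrightarrow> role_ext I R \<inter> role_ext I S = {}"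

fun sat_as :: "('a, 'r, 'c, 'd) interp \<Rightarrow> ('a, 'r, 'c) assertion \<Rightarrow> bool" where
  "sat_as I (CA A c) \<longleftrightarrow> ind I c \<in> conc I A"
| "sat_as I (RA r b c) \<longleftrightarrow> (ind I b, ind I c) \<in> rol I r"

definition is_model :: "('a, 'r, 'c, 'd) interp \<Rightarrow> ('a, 'r) axiom set
    \<Rightarrow> ('a, 'r, 'c) assertion set \<Rightarrow> bool" where
  "is_model I T Ab \<longleftrightarrow> wf_interp I \<and> (\<forall>ax\<in>T. sat_ax I ax) \<and> (\<forall>f\<in>Ab. sat_as I f)"

text \<open>Domain type used for (first-order) entailment: words over individuals and roles,
  i.e. the type in which canonical models live.\<close>
type_synonym ('r, 'c) elem = "'c \<times> 'r role list"

definition consistent :: "('a, 'r, 'c) assertion set \<Rightarrow> ('a, 'r) axiom set \<Rightarrow> bool" where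
  "consistent Ab T \<longleftrightarrow> (\<exists>I :: ('a, 'r, 'c, ('r, 'c) elem) interp. is_model I T Ab)"

definition tbox_entails :: "('a, 'r) axiom set \<Rightarrow> ('a, 'r) axiom \<Rightarrow> bool" where
  "tbox_entails T ax \<longleftrightarrow>
     (\<forall>I :: ('a, 'r, unit, ('r, unit) elem) interp. wf_interp I \<and> (\<forall>t\<in>T. sat_ax I t) \<longrightarrow> sat_ax I ax)"

definition kb_entails_basic :: "('a, 'r, 'c) assertion set \<Rightarrow> ('a, 'r) axiom set
    \<Rightarrow> ('a, 'r) basic \<Rightarrow> 'c \<Rightarrow> bool" where
  "kb_entails_basic Ab T B a \<longleftrightarrow>
     (\<forall>I :: ('a, 'r, 'c, ('r, 'c) elem) interp. is_model I T Ab \<longrightarrow> ind I a \<in> basic_ext I B)"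

definition kb_entails_role :: "('a, 'r, 'c) assertion set \<Rightarrow> ('a, 'r) axiom set
    \<Rightarrow> 'r role \<Rightarrow> 'c \<Rightarrow> 'c \<Rightarrow> bool" where
  "kb_entails_role Ab T R a b \<longleftrightarrow>
     (\<forall>I :: ('a, 'r, 'c, ('r, 'c) elem) interp. is_model I T Ab \<longrightarrow> (ind I a, ind I b) \<in> role_ext I R)"

definition canon_dom :: "('a, 'r, 'c) assertion set \<Rightarrow> ('a, 'r) axiom set \<Rightarrow> ('r, 'c) elem set" where
  "canon_dom Ab T = {(a, ws) | a ws. a \<in> const Ab
     \<and> (ws \<noteq> [] \<longrightarrow> kb_entails_basic Ab T (Ex (hd ws)) a
                     \<and> \<not> (\<exists>b\<in>const Ab. kb_entails_role Ab T (hd ws) a b))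
     \<and> (\<forall>i. Suc i < length ws \<longrightarrow>
            tbox_entails T (CI (Ex (inv (ws ! i))) (Pos (Ex (ws ! Suc i))))
            \<and> inv (ws ! i) \<noteq> ws ! Suc i)}"

definition canon :: "('a, 'r, 'c) assertion set \<Rightarrow> ('a, 'r) axiom set
    \<Rightarrow> ('a, 'r, 'c, ('r, 'c) elem) interp" where
  "canon Ab T = \<lparr> idom = canon_dom Ab T,
     conc = (\<lambda>A. {(a, []) | a. a \<in> const Ab \<and> kb_entails_basic Ab T (Atomic A) a}
               \<union> {(a, ws) | a ws. (a, ws) \<in> canon_dom Ab T \<and> ws \<noteq> []
                     \<and> tbox_entails T (CI (Ex (inv (last ws))) (Pos (Atomic A)))}),
     rol = (\<lambda>r. {((a, []), (b, [])) | a b. RA r a b \<in> Ab}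
               \<union> {((a, ws), (a, ws @ [R])) | a ws R. (a, ws @ [R]) \<in> canon_dom Ab T
                     \<and> tbox_entails T (RI R (RPos (P r)))}
               \<union> {((a, ws @ [R]), (a, ws)) | a ws R. (a, ws @ [R]) \<in> canon_dom Ab T
                     \<and> tbox_entails T (RI R (RPos (Inv r)))}),
     ind = (\<lambda>c. (c, [])) \<rparr>"

definition anonymous :: "('a, 'r, 'c) assertion set \<Rightarrow> ('a, 'r) axiom set \<Rightarrow> ('r, 'c) elem \<Rightarrow> bool" where
  "anonymous Ab T w \<longleftrightarrow> w \<in> canon_dom Ab T \<and> w \<notin> (\<lambda>a. (a, [])) ` const Ab"

datatype ('v, 'c) qterm = Var 'v | Cst 'c

datatype ('a, 'r, 'v, 'c) atom = CAt 'a "('v, 'c) qterm" | RAt 'r "('v, 'c) qterm" "('v, 'c) qterm"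

fun tvars :: "('v, 'c) qterm \<Rightarrow> 'v set" where
  "tvars (Var v) = {v}"
| "tvars (Cst c) = {}"

fun avars :: "('a, 'r, 'v, 'c) atom \<Rightarrow> 'v set" where
  "avars (CAt A t) = tvars t"
| "avars (RAt r t u) = tvars t \<union> tvars u"

fun teval :: "('a, 'r, 'c, 'd) interp \<Rightarrow> ('v \<Rightarrow> 'd) \<Rightarrow> ('v, 'c) qterm \<Rightarrow> 'd" where
  "teval I h (Var v) = h v"
| "teval I h (Cst c) = ind I c"

fun atom_hom :: "('a, 'r, 'c, 'd) interp \<Rightarrow> ('v \<Rightarrow> 'd) \<Rightarrow> ('a, 'r, 'v, 'c) atom \<Rightarrow> bool" where
  "atom_hom I h (CAt A t) \<longleftrightarrow> teval I h t \<in> conc I A"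
| "atom_hom I h (RAt r t u) \<longleftrightarrow> (teval I h t, teval I h u) \<in> rol I r"

definition is_hom :: "('a, 'r, 'v, 'c) atom set \<Rightarrow> ('a, 'r, 'c, 'd) interp \<Rightarrow> ('v \<Rightarrow> 'd) \<Rightarrow> bool" where
  "is_hom q I h \<longleftrightarrow> (\<forall>\<alpha>\<in>q. atom_hom I h \<alpha>)"

text \<open>mu : vars(alpha) \<rightharpoonup> const(f) \<union> {\<circledast>}, with None standing for \<circledast>.\<close>
definition models_mu :: "('a, 'r, 'c) assertion set \<Rightarrow> ('a, 'r) axiom set
    \<Rightarrow> ('v \<rightharpoonup> 'c option) \<Rightarrow> ('a, 'r, 'v, 'c) atom \<Rightarrow> bool" where
  "models_mu Ab T mu \<alpha> \<longleftrightarrow> (\<exists>h. is_hom {\<alpha>} (canon Ab T) h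
     \<and> (\<forall>v\<in>avars \<alpha>. \<forall>c. mu v = Some (Some c) \<longrightarrow> h v = (c, []))
     \<and> (\<forall>v\<in>avars \<alpha>. mu v = Some None \<longrightarrow> anonymous Ab T (h v)))"

definition admissible_mu :: "('a, 'r, 'c) assertion \<Rightarrow> ('a, 'r, 'v, 'c) atom \<Rightarrow> ('v \<rightharpoonup> 'c option) \<Rightarrow> bool" where
  "admissible_mu f \<alpha> mu \<longleftrightarrow> dom mu = avars \<alpha> \<and> ran mu \<subseteq> Some ` consts_of f \<union> {None}"

definition interaction_free :: "('a, 'r) axiom set \<Rightarrow> ('a, 'r, 'v, 'c) atom set \<Rightarrow> bool" where
  "interaction_free T q \<longleftrightarrow>
     (\<forall>f \<alpha> \<beta> mu\<^sub>\<alpha> mu\<^sub>\<beta>. \<alpha> \<in> q \<and> \<beta> \<in> q \<and> admissible_mu f \<alpha> mu\<^sub>\<alpha> \<and> admissible_mu f \<beta> mu\<^sub>\<beta>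
        \<and> models_mu {f} T mu\<^sub>\<alpha> \<alpha> \<and> models_mu {f} T mu\<^sub>\<beta> \<beta>
        \<longrightarrow> (\<alpha>, mu\<^sub>\<alpha>) = (\<beta>, mu\<^sub>\<beta>))"

definition shared_var :: "('a, 'r, 'v, 'c) atom set \<Rightarrow> 'v \<Rightarrow> bool" where
  "shared_var q x \<longleftrightarrow> (\<exists>\<alpha>\<in>q. \<exists>\<beta>\<in>q. \<alpha> \<noteq> \<beta> \<and> x \<in> avars \<alpha> \<and> x \<in> avars \<beta>)"

end

theory Submission
  imports Defs
begin


lemma elem_pair_inj: "\<exists>\<phi> :: ('r,'c) elem \<times> ('r,'c) elem \<Rightarrow> ('r,'c) elem. inj \<phi>"
proof -
  have "infinite (UNIV :: 'r role list set)" by (rule infinite_UNIV_listI)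
  hence inf: "infinite (UNIV :: ('r,'c) elem set)"
    by (simp add: finite_prod)
  note Y = card_of_Times_same_infinite[OF inf, unfolded ordIso_iff_ordLeq, THEN conjunct1]
  obtain \<phi> :: "('r,'c) elem \<times> ('r,'c) elem \<Rightarrow> ('r,'c) elem"
    where "inj_on \<phi> (UNIV \<times> UNIV)"
    using card_of_ordLeq[THEN iffD2, OF Y] by blast
  thus ?thesis by auto
qed

fun posax :: "('a, 'r) axiom \<Rightarrow> bool" where
  "posax (CI B (Pos B')) = True"
| "posax (CI B (Neg B')) = False"
| "posax (RI R (RPos S)) = True"
| "posax (RI R (RNeg S)) = False"

definition prodI :: "('a,'r,'c,'d) interp \<Rightarrow> ('a,'r,'c,'e) interp \<Rightarrow> ('a,'r,'c,'d\<times>'e) interp" where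
"prodI I1 I2 = \<lparr> idom = idom I1 \<times> idom I2, conc = (\<lambda>A. conc I1 A \<times> conc I2 A),
   rol = (\<lambda>r. {((x1,y1),(x2,y2)) | x1 y1 x2 y2. (x1,x2) \<in> rol I1 r \<and> (y1,y2) \<in> rol I2 r}),
   ind = (\<lambda>c. (ind I1 c, ind I2 c)) \<rparr>"

lemma role_ext_prod: "role_ext (prodI I1 I2) R =
  {((x1,y1),(x2,y2)) | x1 y1 x2 y2. (x1,x2) \<in> role_ext I1 R \<and> (y1,y2) \<in> role_ext I2 R}"
  by (cases R) (auto simp: prodI_def)

lemma basic_ext_prod: "basic_ext (prodI I1 I2) B = basic_ext I1 B \<times> basic_ext I2 B"
proof (cases B)
  case (Atomic A) thus ?thesis by (simp add: prodI_def)
next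
  case (Ex R) thus ?thesis by (simp add: role_ext_prod) blast
qed

lemma sat_ax_prod: assumes "sat_ax I1 ax" "posax ax \<Longrightarrow> sat_ax I2 ax" shows "sat_ax (prodI I1 I2) ax"
proof (cases ax)
  case (CI B C) thus ?thesis
    using assms by (cases C) (auto simp: basic_ext_prod)
next
  case (RI R S) thus ?thesis
    using assms by (cases S) (auto simp: role_ext_prod)
qed

lemma sat_as_prod: "sat_as I1 f \<Longrightarrow> sat_as I2 f \<Longrightarrow> sat_as (prodI I1 I2) f"
  by (cases f) (auto simp: prodI_def)

lemma wf_prod: "wf_interp I1 \<Longrightarrow> wf_interp I2 \<Longrightarrow> wf_interp (prodI I1 I2)"
  unfolding wf_interp_def prodI_def inj_def by auto

definition trI :: "('d \<Rightarrow> 'e) \<Rightarrow> ('a,'r,'c,'d) interp \<Rightarrow> ('a,'r,'c,'e) interp" where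
"trI \<phi> I = \<lparr> idom = \<phi> ` idom I, conc = (\<lambda>A. \<phi> ` conc I A),
   rol = (\<lambda>r. map_prod \<phi> \<phi> ` rol I r), ind = \<phi> \<circ> ind I \<rparr>"

lemma role_ext_tr: "role_ext (trI \<phi> I) R = map_prod \<phi> \<phi> ` role_ext I R"
  by (cases R) (auto simp: trI_def)

lemma basic_ext_tr: "basic_ext (trI \<phi> I) B = \<phi> ` basic_ext I B"
proof (cases B)
  case (Atomic A) thus ?thesis by (simp add: trI_def)
next
  case (Ex R) thus ?thesis by (simp add: role_ext_tr) force
qed

lemma sat_ax_tr: assumes "inj \<phi>" "sat_ax I ax" shows "sat_ax (trI \<phi> I) ax"
proof -
  have ip: "inj (map_prod \<phi> \<phi>)" using assms(1) unfolding inj_def by auto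
  show ?thesis
  proof (cases ax)
    case (CI B C) thus ?thesis
      using assms by (cases C) (auto simp: basic_ext_tr inj_image_subset_iff image_Int[symmetric])
  next
    case (RI R S) thus ?thesis
      using assms ip by (cases S) (auto simp: role_ext_tr inj_image_subset_iff image_Int[symmetric])
  qed
qed

lemma sat_as_tr: "sat_as I f \<Longrightarrow> sat_as (trI \<phi> I) f"
  by (cases f) (auto simp: trI_def)

lemma wf_tr: "inj \<phi> \<Longrightarrow> wf_interp I \<Longrightarrow> wf_interp (trI \<phi> I)"
  unfolding wf_interp_def trI_def by (auto simp: inj_compose) (blast intro: inj_compose)+

definition gl :: "('a,'r,'c,('r,'c) elem) interp \<Rightarrow> ('a,'r,'c) assertion \<Rightarrow> ('r,'c) elem \<Rightarrow> ('r,'c) elem" where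
"gl I f d = (if \<exists>c\<in>consts_of f. d = ind I c then (THE c. c \<in> consts_of f \<and> d = ind I c, [])
            else (fst d, Inv undefined # snd d))"

lemma the_const: "inj (ind I) \<Longrightarrow> c \<in> consts_of f \<Longrightarrow> (THE c'. c' \<in> consts_of f \<and> ind I c = ind I c') = c"
  by (rule the_equality) (auto dest: injD)

lemma gl_ind: assumes "inj (ind I)" "c \<in> consts_of f" shows "gl I f (ind I c) = (c, [])"
proof -
  have ex: "\<exists>c'\<in>consts_of f. ind I c = ind I c'" using assms by blast
  show ?thesis using ex the_const[OF assms] by (simp add: gl_def)
qed

lemma gl_const: assumes "inj (ind I)" "gl I f d = (c, [])" shows "c \<in> consts_of f \<and> d = ind I c"
proof (cases "\<exists>c'\<in>consts_of f. d = ind I c'")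
  case True
  then obtain c' where c': "c' \<in> consts_of f" "d = ind I c'" by blast
  hence "gl I f d = (c', [])" using gl_ind[OF assms(1) c'(1)] by simp
  with assms(2) c' show ?thesis by simp
next
  case False
  hence "gl I f d = (fst d, Inv undefined # snd d)" unfolding gl_def by auto
  with assms(2) show ?thesis by simp
qed

definition uni :: "('a,'r,'c) assertion set \<Rightarrow> (('a,'r,'c) assertion \<Rightarrow> ('a,'r,'c,('r,'c) elem) interp)
   \<Rightarrow> ('a,'r,'c,('r,'c) elem) interp" where
"uni Ab Is = \<lparr> idom = range (\<lambda>c. (c,[])) \<union> (\<Union>f\<in>Ab. gl (Is f) f ` idom (Is f)),
   conc = (\<lambda>A. \<Union>f\<in>Ab. gl (Is f) f ` conc (Is f) A),
   rol = (\<lambda>r. \<Union>f\<in>Ab. map_prod (gl (Is f) f) (gl (Is f) f) ` rol (Is f) r),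
   ind = (\<lambda>c. (c,[])) \<rparr>"

lemma role_ext_uni: "role_ext (uni Ab Is) R = (\<Union>f\<in>Ab. map_prod (gl (Is f) f) (gl (Is f) f) ` role_ext (Is f) R)"
proof (cases R)
  case (P r) thus ?thesis by (simp add: uni_def)
next
  case (Inv r) thus ?thesis by (auto simp: uni_def image_iff) force+
qed

lemma basic_ext_uni: "basic_ext (uni Ab Is) B = (\<Union>f\<in>Ab. gl (Is f) f ` basic_ext (Is f) B)"
proof (cases B)
  case (Atomic A) thus ?thesis by (simp add: uni_def)
next
  case (Ex R) thus ?thesis by (simp add: role_ext_uni) force
qed

lemma sat_ax_uni: assumes "\<And>f. f \<in> Ab \<Longrightarrow> sat_ax (Is f) ax" "posax ax" shows "sat_ax (uni Ab Is) ax"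
proof (cases ax)
  case (CI B C)
  then obtain B' where C: "C = Pos B'" using assms(2) by (cases C) auto
  have "\<And>f. f \<in> Ab \<Longrightarrow> basic_ext (Is f) B \<subseteq> basic_ext (Is f) B'"
    using assms(1) CI C by fastforce
  hence "basic_ext (uni Ab Is) B \<subseteq> basic_ext (uni Ab Is) B'"
    unfolding basic_ext_uni by blast
  thus ?thesis using CI C by simp
next
  case (RI R S)
  then obtain S' where S: "S = RPos S'" using assms(2) by (cases S) auto
  have "\<And>f. f \<in> Ab \<Longrightarrow> role_ext (Is f) R \<subseteq> role_ext (Is f) S'"
    using assms(1) RI S by fastforce
  hence "role_ext (uni Ab Is) R \<subseteq> role_ext (uni Ab Is) S'"
    unfolding role_ext_uni by blast
  thus ?thesis using RI S by simp
qed

lemma sat_as_uni: "f \<in> Ab \<Longrightarrow> wf_interp (Is f) \<Longrightarrow> sat_as (Is f) f \<Longrightarrow> sat_as (uni Ab Is) f"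
  by (cases f) (auto simp: uni_def wf_interp_def gl_ind intro!: bexI[of _ f] image_eqI)

lemma wf_uni: "(\<And>f. f \<in> Ab \<Longrightarrow> wf_interp (Is f)) \<Longrightarrow> wf_interp (uni Ab Is)"
  unfolding wf_interp_def uni_def inj_def by auto blast+

lemma single_support:
  fixes T :: "('a, 'r) axiom set" and Ab :: "('a, 'r, 'c) assertion set" and B :: "('a, 'r) basic"
  assumes "consistent Ab T" and "kb_entails_basic Ab T B a"
  shows "\<exists>f\<in>Ab. a \<in> consts_of f \<and> kb_entails_basic {f} T B a"
proof (rule ccontr)
  assume nf: "\<not> ?thesis"
  obtain J :: "('a, 'r, 'c, ('r, 'c) elem) interp" where J: "is_model J T Ab"
    using assms(1) unfolding consistent_def by blast
  have "\<forall>f\<in>Ab. \<exists>I :: ('a, 'r, 'c, ('r, 'c) elem) interp. is_model I T {f} \<and> (a \<in> consts_of f \<longrightarrow> ind I a \<notin> basic_ext I B)"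
  proof
    fix f assume f: "f \<in> Ab"
    show "\<exists>I :: ('a, 'r, 'c, ('r, 'c) elem) interp. is_model I T {f} \<and> (a \<in> consts_of f \<longrightarrow> ind I a \<notin> basic_ext I B)"
    proof (cases "a \<in> consts_of f")
      case True
      with nf f show ?thesis unfolding kb_entails_basic_def by blast
    next
      case False
      with J f show ?thesis unfolding is_model_def by blast
    qed
  qed
  from bchoice[OF this] obtain Is :: "('a,'r,'c) assertion \<Rightarrow> ('a,'r,'c,('r,'c) elem) interp" where Is0: "\<forall>f\<in>Ab. is_model (Is f) T {f} \<and> (a \<in> consts_of f \<longrightarrow> ind (Is f) a \<notin> basic_ext (Is f) B)"
    by blast
  hence Is: "\<And>f. f \<in> Ab \<Longrightarrow> is_model (Is f) T {f} \<and> (a \<in> consts_of f \<longrightarrow> ind (Is f) a \<notin> basic_ext (Is f) B)"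
    by blast
  obtain \<phi> :: "('r,'c) elem \<times> ('r,'c) elem \<Rightarrow> ('r,'c) elem" where phi: "inj \<phi>"
    using elem_pair_inj by blast
  define M where "M = trI \<phi> (prodI J (uni Ab Is))"
  have wfI: "\<And>f. f \<in> Ab \<Longrightarrow> wf_interp (Is f)" using Is unfolding is_model_def by blast
  have "is_model M T Ab"
    unfolding is_model_def M_def
  proof (intro conjI ballI)
    show "wf_interp (trI \<phi> (prodI J (uni Ab Is)))"
      using J wfI phi by (intro wf_tr wf_prod wf_uni) (auto simp: is_model_def)
  next
    fix ax assume ax: "ax \<in> T"
    show "sat_ax (trI \<phi> (prodI J (uni Ab Is))) ax"
      using J Is ax phi by (intro sat_ax_tr sat_ax_prod sat_ax_uni) (auto simp: is_model_def)
  next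
    fix f assume f: "f \<in> Ab"
    show "sat_as (trI \<phi> (prodI J (uni Ab Is))) f"
      using J Is f wfI by (intro sat_as_tr sat_as_prod sat_as_uni) (auto simp: is_model_def)
  qed
  hence "ind M a \<in> basic_ext M B" using assms(2) unfolding kb_entails_basic_def by blast
  moreover have "ind M a = \<phi> (ind J a, (a,[]))" by (simp add: M_def trI_def prodI_def uni_def)
  ultimately have "(ind J a, (a,[])) \<in> basic_ext J B \<times> basic_ext (uni Ab Is) B"
    unfolding M_def basic_ext_tr basic_ext_prod using inj_image_mem_iff[OF phi] by metis
  hence "(a, []) \<in> basic_ext (uni Ab Is) B" by blast
  then obtain f d where f: "f \<in> Ab" and d: "d \<in> basic_ext (Is f) B" and gd: "gl (Is f) f d = (a, [])"
    unfolding basic_ext_uni by auto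
  from gl_const[OF _ gd] wfI[OF f] have "a \<in> consts_of f" "d = ind (Is f) a"
    unfolding wf_interp_def by auto
  with Is[OF f] d show False by auto
qed

lemma cd_const: "(a, vs) \<in> canon_dom Ab T \<Longrightarrow> a \<in> const Ab"
  unfolding canon_dom_def by auto

lemma cd_iff: "(a, vs) \<in> canon_dom Ab T \<longleftrightarrow> a \<in> const Ab
     \<and> (vs \<noteq> [] \<longrightarrow> kb_entails_basic Ab T (Ex (hd vs)) a
                     \<and> \<not> (\<exists>b\<in>const Ab. kb_entails_role Ab T (hd vs) a b))
     \<and> (\<forall>i. Suc i < length vs \<longrightarrow>
            tbox_entails T (CI (Ex (inv (vs ! i))) (Pos (Ex (vs ! Suc i))))
            \<and> inv (vs ! i) \<noteq> vs ! Suc i)"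
  unfolding canon_dom_def by simp

lemma cd_prefix:
  assumes "(a, vs @ [R]) \<in> canon_dom Ab T" "vs \<noteq> []"
  shows "(a, vs) \<in> canon_dom Ab T"
proof -
  have hd: "hd (vs @ [R]) = hd vs" using assms(2) by simp
  have nth: "\<And>i. i < length vs \<Longrightarrow> (vs @ [R]) ! i = vs ! i" by (simp add: nth_append)
  have A: "a \<in> const Ab
     \<and> (kb_entails_basic Ab T (Ex (hd vs)) a
                     \<and> \<not> (\<exists>b\<in>const Ab. kb_entails_role Ab T (hd vs) a b))"
    using assms unfolding cd_iff hd by simp
  have "\<forall>i. Suc i < length vs \<longrightarrow>
            tbox_entails T (CI (Ex (inv (vs ! i))) (Pos (Ex (vs ! Suc i))))
            \<and> inv (vs ! i) \<noteq> vs ! Suc i"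
  proof (intro allI impI)
    fix i assume i: "Suc i < length vs"
    hence "Suc i < length (vs @ [R])" by simp
    with assms(1) have "tbox_entails T (CI (Ex (inv ((vs @ [R]) ! i))) (Pos (Ex ((vs @ [R]) ! Suc i))))
            \<and> inv ((vs @ [R]) ! i) \<noteq> (vs @ [R]) ! Suc i" unfolding cd_iff by blast
    thus "tbox_entails T (CI (Ex (inv (vs ! i))) (Pos (Ex (vs ! Suc i))))
            \<and> inv (vs ! i) \<noteq> vs ! Suc i" using i nth[of i] nth[of "Suc i"] by simp
  qed
  with A show ?thesis unfolding cd_iff by blast
qed

lemma tvars_Var: "x \<in> tvars t \<Longrightarrow> t = Var x"
  by (cases t) auto

lemma RA_const: "RA r a b \<in> Ab \<Longrightarrow> a \<in> const Ab \<and> b \<in> const Ab"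
  unfolding const_def by force

lemma rol_canon: "(p, q) \<in> rol (canon Ab T) r \<longleftrightarrow>
   (\<exists>a b. p = (a,[]) \<and> q = (b,[]) \<and> RA r a b \<in> Ab)
 \<or> (\<exists>a ws R. p = (a,ws) \<and> q = (a, ws @ [R]) \<and> (a, ws @ [R]) \<in> canon_dom Ab T \<and> tbox_entails T (RI R (RPos (P r))))
 \<or> (\<exists>a ws R. q = (a,ws) \<and> p = (a, ws @ [R]) \<and> (a, ws @ [R]) \<in> canon_dom Ab T \<and> tbox_entails T (RI R (RPos (Inv r))))"
  unfolding canon_def by (simp only: interp.simps Un_iff mem_Collect_eq prod.inject) blast

lemma conc_canon: "p \<in> conc (canon Ab T) A \<longleftrightarrow>
   (\<exists>a. p = (a,[]) \<and> a \<in> const Ab \<and> kb_entails_basic Ab T (Atomic A) a)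
 \<or> (p \<in> canon_dom Ab T \<and> snd p \<noteq> [] \<and> tbox_entails T (CI (Ex (inv (last (snd p)))) (Pos (Atomic A))))"
  unfolding canon_def by (cases p) auto

lemma ind_canon: "ind (canon Ab T) c = (c, [])"
  unfolding canon_def by simp

lemma edge_anon:
  assumes "(p, q) \<in> rol (canon Ab T) r" "w = p \<or> w = q" "w \<notin> (\<lambda>a. (a, [])) ` const Ab"
  shows "snd w \<noteq> [] \<and> w \<in> canon_dom Ab T"
  using assms(1) unfolding rol_canon
proof (elim disjE exE conjE)
  fix a b assume "p = (a, [])" "q = (b, [])" "RA r a b \<in> Ab"
  moreover from RA_const[OF this(3)] have "a \<in> const Ab" "b \<in> const Ab" by auto
  ultimately have False using assms(2,3) by auto
  thus ?thesis ..
next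
  fix a ws R assume pq: "p = (a, ws)" "q = (a, ws @ [R])" and cd: "(a, ws @ [R]) \<in> canon_dom Ab T"
  have ac: "a \<in> const Ab" using cd_const[OF cd] .
  show ?thesis
  proof (cases "w = q")
    case True with pq cd show ?thesis by simp
  next
    case False
    hence "w = p" using assms(2) by blast
    moreover have "ws \<noteq> []" using assms(3) ac pq calculation by auto
    ultimately show ?thesis using pq cd_prefix[OF cd] by simp
  qed
next
  fix a ws R assume pq: "q = (a, ws)" "p = (a, ws @ [R])" and cd: "(a, ws @ [R]) \<in> canon_dom Ab T"
  have ac: "a \<in> const Ab" using cd_const[OF cd] .
  show ?thesis
  proof (cases "w = p")
    case True with pq cd show ?thesis by simp
  next
    case False
    hence "w = q" using assms(2) by blast
    moreover have "ws \<noteq> []" using assms(3) ac pq calculation by auto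
    ultimately show ?thesis using pq cd_prefix[OF cd] by simp
  qed
qed

lemma anon_atom:
  assumes "atom_hom (canon Ab T) h \<gamma>" "x \<in> avars \<gamma>" "h x \<notin> (\<lambda>a. (a, [])) ` const Ab"
  shows "snd (h x) \<noteq> [] \<and> h x \<in> canon_dom Ab T"
proof (cases \<gamma>)
  case (CAt A t)
  with assms have "t = Var x" using tvars_Var by auto
  with assms CAt show ?thesis by (auto simp: conc_canon)
next
  case (RAt r t u)
  from assms RAt have tu: "t = Var x \<or> u = Var x" by (auto dest: tvars_Var)
  have rr: "(teval (canon Ab T) h t, teval (canon Ab T) h u) \<in> rol (canon Ab T) r" using assms RAt by simp
  from tu have "h x = teval (canon Ab T) h t \<or> h x = teval (canon Ab T) h u" by auto
  from edge_anon[OF rr this assms(3)] show ?thesis .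
qed

lemma kb_role_mono: "f \<in> Ab \<Longrightarrow> kb_entails_role {f} T R a b \<Longrightarrow> kb_entails_role Ab T R a b"
  unfolding kb_entails_role_def is_model_def by auto

lemma const_single: "const {f} = consts_of f"
  unfolding const_def by simp

lemma cd_transfer:
  assumes "f \<in> Ab" "a \<in> consts_of f" "kb_entails_basic {f} T (Ex R1) a"
    "(a, vs) \<in> canon_dom Ab T" "vs \<noteq> []" "hd vs = R1"
  shows "(a, vs) \<in> canon_dom {f} T"
proof -
  have sub: "const {f} \<subseteq> const Ab" using assms(1) unfolding const_def by auto
  have nb: "\<not> (\<exists>b\<in>const {f}. kb_entails_role {f} T (hd vs) a b)"
  proof
    assume "\<exists>b\<in>const {f}. kb_entails_role {f} T (hd vs) a b"
    then obtain b where "b \<in> const Ab" "kb_entails_role Ab T (hd vs) a b"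
      using sub kb_role_mono[OF assms(1)] by blast
    with assms(4,5) show False unfolding cd_iff by blast
  qed
  show ?thesis using assms(2,3,4,5,6) nb unfolding cd_iff const_single by blast
qed

lemma edge_transfer:
  assumes e: "(p, q) \<in> rol (canon Ab T) r" and w: "w = p \<or> w = q" "w = (a, ws)" "ws \<noteq> []"
    and good: "\<And>vs. (a, vs) \<in> canon_dom Ab T \<Longrightarrow> vs \<noteq> [] \<Longrightarrow> hd vs = hd ws \<Longrightarrow> (a, vs) \<in> canon_dom Ab' T"
  shows "(p, q) \<in> rol (canon Ab' T) r \<and> fst p = a \<and> fst q = a
     \<and> (snd p = [] \<or> p \<in> canon_dom Ab' T) \<and> (snd q = [] \<or> q \<in> canon_dom Ab' T)"
  using e[unfolded rol_canon]
proof (elim disjE exE conjE)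
  fix a' b' assume "p = (a', [])" "q = (b', [])"
  with w have False by auto
  thus ?thesis ..
next
  fix a' vs R assume pq: "p = (a', vs)" "q = (a', vs @ [R])" and cd: "(a', vs @ [R]) \<in> canon_dom Ab T"
    and tb: "tbox_entails T (RI R (RPos (P r)))"
  have aa: "a' = a" using w pq by auto
  have cd': "(a', vs @ [R]) \<in> canon_dom Ab' T"
  proof (cases "w = p")
    case True
    hence "vs = ws" using w pq by auto
    thus ?thesis using good[of "vs @ [R]"] cd aa w(3) \<open>ws \<noteq> []\<close> by simp
  next
    case False
    hence "ws = vs @ [R]" using w pq by auto
    thus ?thesis using good[of "vs @ [R]"] cd aa by simp
  qed
  have "vs = [] \<or> (a', vs) \<in> canon_dom Ab' T" using cd_prefix[OF cd'] by blast
  moreover have "(p, q) \<in> rol (canon Ab' T) r" unfolding rol_canon using pq cd' tb by blast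
  ultimately show ?thesis using pq aa cd' by auto
next
  fix a' vs R assume pq: "q = (a', vs)" "p = (a', vs @ [R])" and cd: "(a', vs @ [R]) \<in> canon_dom Ab T"
    and tb: "tbox_entails T (RI R (RPos (Inv r)))"
  have aa: "a' = a" using w pq by auto
  have cd': "(a', vs @ [R]) \<in> canon_dom Ab' T"
  proof (cases "w = q")
    case True
    hence "vs = ws" using w pq by auto
    thus ?thesis using good[of "vs @ [R]"] cd aa w(3) \<open>ws \<noteq> []\<close> by simp
  next
    case False
    hence "ws = vs @ [R]" using w pq by auto
    thus ?thesis using good[of "vs @ [R]"] cd aa by simp
  qed
  have "vs = [] \<or> (a', vs) \<in> canon_dom Ab' T" using cd_prefix[OF cd'] by blast
  moreover have "(p, q) \<in> rol (canon Ab' T) r" unfolding rol_canon using pq cd' tb by blast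
  ultimately show ?thesis using pq aa cd' by auto
qed

lemma teval_canon: "teval (canon Ab T) h t = teval (canon Ab' T) h t"
  by (cases t) (simp_all add: ind_canon)

lemma atom_transfer:
  assumes hom: "atom_hom (canon Ab T) h \<gamma>" and x: "x \<in> avars \<gamma>" and hx: "h x = (a, ws)" "ws \<noteq> []"
    and cdx: "h x \<in> canon_dom Ab T"
    and good: "\<And>vs. (a, vs) \<in> canon_dom Ab T \<Longrightarrow> vs \<noteq> [] \<Longrightarrow> hd vs = hd ws \<Longrightarrow> (a, vs) \<in> canon_dom Ab' T"
  shows "atom_hom (canon Ab' T) h \<gamma> \<and> (\<forall>v\<in>avars \<gamma>. fst (h v) = a \<and> (snd (h v) = [] \<or> h v \<in> canon_dom Ab' T))"
proof (cases \<gamma>)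
  case (CAt A t)
  with x have t: "t = Var x" using tvars_Var by auto
  with hom CAt have "h x \<in> conc (canon Ab T) A" by simp
  with hx have tb: "tbox_entails T (CI (Ex (inv (last ws))) (Pos (Atomic A)))" unfolding conc_canon by auto
  have cd': "h x \<in> canon_dom Ab' T" using good[of ws] cdx hx by simp
  hence "h x \<in> conc (canon Ab' T) A" unfolding conc_canon using tb hx by simp
  thus ?thesis using CAt t cd' hx by simp
next
  case (RAt r t u)
  from x RAt have tu: "t = Var x \<or> u = Var x" by (auto dest: tvars_Var)
  have rr: "(teval (canon Ab T) h t, teval (canon Ab T) h u) \<in> rol (canon Ab T) r" using hom RAt by simp
  from tu have "h x = teval (canon Ab T) h t \<or> h x = teval (canon Ab T) h u" by auto
  note E = edge_transfer[OF rr this hx good]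
  have "(teval (canon Ab' T) h t, teval (canon Ab' T) h u) \<in> rol (canon Ab' T) r"
    using conjunct1[OF E] unfolding teval_canon[of Ab T h t Ab'] teval_canon[of Ab T h u Ab'] .
  hence "atom_hom (canon Ab' T) h \<gamma>" using RAt by simp
  moreover have "\<forall>v\<in>avars \<gamma>. fst (h v) = a \<and> (snd (h v) = [] \<or> h v \<in> canon_dom Ab' T)"
  proof
    fix v assume "v \<in> avars \<gamma>"
    hence "t = Var v \<or> u = Var v" using RAt by (auto dest: tvars_Var)
    hence "h v = teval (canon Ab T) h t \<or> h v = teval (canon Ab T) h u" by auto
    moreover have "fst (teval (canon Ab T) h t) = a \<and> (snd (teval (canon Ab T) h t) = [] \<or> teval (canon Ab T) h t \<in> canon_dom Ab' T)"
      using E by blast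
    moreover have "fst (teval (canon Ab T) h u) = a \<and> (snd (teval (canon Ab T) h u) = [] \<or> teval (canon Ab T) h u \<in> canon_dom Ab' T)"
      using E by blast
    ultimately show "fst (h v) = a \<and> (snd (h v) = [] \<or> h v \<in> canon_dom Ab' T)" by metis
  qed
  ultimately show ?thesis by blast
qed

theorem lemma9:
  fixes T :: "('a, 'r) axiom set"
    and q :: "('a, 'r, 'v, 'c) atom set"
    and Ab :: "('a, 'r, 'c) assertion set"
    and x :: 'v
    and h :: "'v \<Rightarrow> ('r, 'c) elem"
  assumes "finite T" and "finite q" and "finite Ab"
    and "interaction_free T q"
    and "consistent Ab T"
    and "shared_var q x"
    and "is_hom q (canon Ab T) h"
  shows "h x \<in> (\<lambda>a. (a, [])) ` const Ab"
proof (rule ccontr)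
  assume nx: "h x \<notin> (\<lambda>a. (a, [])) ` const Ab"
  from assms(6) obtain \<alpha> \<beta> where ab: "\<alpha> \<in> q" "\<beta> \<in> q" "\<alpha> \<noteq> \<beta>" "x \<in> avars \<alpha>" "x \<in> avars \<beta>"
    unfolding shared_var_def by blast
  have homs: "\<And>\<gamma>. \<gamma> \<in> q \<Longrightarrow> atom_hom (canon Ab T) h \<gamma>" using assms(7) unfolding is_hom_def by blast
  from anon_atom[OF homs[OF ab(1)] ab(4) nx] have hx0: "snd (h x) \<noteq> []" "h x \<in> canon_dom Ab T" by auto
  obtain a ws where hx: "h x = (a, ws)" by (cases "h x")
  with hx0 have ws: "ws \<noteq> []" and cdx: "(a, ws) \<in> canon_dom Ab T" by auto
  hence "kb_entails_basic Ab T (Ex (hd ws)) a" unfolding cd_iff by blast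
  from single_support[OF assms(5) this] obtain f where f: "f \<in> Ab" "a \<in> consts_of f"
    "kb_entails_basic {f} T (Ex (hd ws)) a" by blast
  have good: "\<And>vs. (a, vs) \<in> canon_dom Ab T \<Longrightarrow> vs \<noteq> [] \<Longrightarrow> hd vs = hd ws \<Longrightarrow> (a, vs) \<in> canon_dom {f} T"
    using cd_transfer[OF f] by blast
  define mu :: "('a, 'r, 'v, 'c) atom \<Rightarrow> 'v \<Rightarrow> 'c option option" where "mu = (\<lambda>\<gamma> v. if v \<in> avars \<gamma> then Some (if snd (h v) = [] then Some (fst (h v)) else None) else None)"
  have key: "admissible_mu f \<gamma> (mu \<gamma>) \<and> models_mu {f} T (mu \<gamma>) \<gamma>" if g: "\<gamma> \<in> q" "x \<in> avars \<gamma>" for \<gamma>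
  proof -
    note AT = atom_transfer[OF homs[OF g(1)] g(2) hx ws cdx[folded hx] good]
    have at: "atom_hom (canon {f} T) h \<gamma>" using conjunct1[OF AT] .
    have vs: "\<And>v. v \<in> avars \<gamma> \<Longrightarrow> fst (h v) = a \<and> (snd (h v) = [] \<or> h v \<in> canon_dom {f} T)"
      using conjunct2[OF AT] by blast
    have "dom (mu \<gamma>) = avars \<gamma>" unfolding mu_def dom_def by auto
    moreover have "ran (mu \<gamma>) \<subseteq> Some ` consts_of f \<union> {None}"
    proof
      fix z assume "z \<in> ran (mu \<gamma>)"
      then obtain v where "mu \<gamma> v = Some z" unfolding ran_def by blast
      hence v: "v \<in> avars \<gamma>" and z: "z = (if snd (h v) = [] then Some (fst (h v)) else None)"
        unfolding mu_def by (auto split: if_splits)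
      show "z \<in> Some ` consts_of f \<union> {None}" using vs[OF v] f(2) z by auto
    qed
    ultimately have adm: "admissible_mu f \<gamma> (mu \<gamma>)" unfolding admissible_mu_def by blast
    have "models_mu {f} T (mu \<gamma>) \<gamma>"
      unfolding models_mu_def
    proof (intro exI conjI ballI allI impI)
      show "is_hom {\<gamma>} (canon {f} T) h" using at unfolding is_hom_def by simp
    next
      fix v c assume v: "v \<in> avars \<gamma>" and "mu \<gamma> v = Some (Some c)"
      hence "snd (h v) = []" "fst (h v) = c" unfolding mu_def by (auto split: if_splits)
      thus "h v = (c, [])" by (cases "h v") auto
    next
      fix v assume v: "v \<in> avars \<gamma>" and "mu \<gamma> v = Some None"
      hence ne: "snd (h v) \<noteq> []" unfolding mu_def by (auto split: if_splits)
      with vs[OF v] have "h v \<in> canon_dom {f} T" by blast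
      with ne show "anonymous {f} T (h v)" unfolding anonymous_def by auto
    qed
    with adm show ?thesis by blast
  qed
  from key[OF ab(1,4)] key[OF ab(2,5)] ab(1,2) have "(\<alpha>, mu \<alpha>) = (\<beta>, mu \<beta>)"
    using assms(4)[unfolded interaction_free_def, rule_format, of \<alpha> \<beta> f "mu \<alpha>" "mu \<beta>"] by simp
  with ab(3) show False by simp
qed

end
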